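(* Let $n\ge 3$ and $2\le i\le n-1$, and let $\beta\in B_n(D)$ be such that $\pi(\beta)$ is a cycle of length $i+1$. Then the subgroup $H_\beta=\langle P_n(D),\beta\rangle$ of $B_n(D)$ is not bi-orderable.
   Context: $B_n(D)$ is the Artin braid group on $n$ strands, with generators $\sigma_1,\dots,\sigma_{n-1}$ and relations $\sigma_i\sigma_j=\sigma_j\sigma_i$ for $|i-j|\ge 2$ and $\sigma_i\sigma_{i+1}\sigma_i=\sigma_{i+1}\sigma_i\sigma_{i+1}$. The permutation homomorphism $\pi: B_n(D)\to S_n$ is given by $\pi(\sigma_i)=(i,i+1)$, and $P_n(D)=\ker\pi$. $H_\beta=\langle P_n(D),\beta\rangle$ is the subgroup generated by $P_n(D)$ and $\beta$. A group is bi-orderable if it admits a strict total ordering invariant under both left and right multiplication. *)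

theory Defs
  imports "HOL-Algebra.Algebra" "HOL-Combinatorics.Cycles" "HOL-Combinatorics.Transposition"
begin

text \<open>Braid group B_n(D) via its standard (Artin) presentation. A word is a list of
letters (i, True) = sigma_i and (i, False) = sigma_i inverse, with 1 \<le> i \<le> n-1.\<close>

type_synonym bword = "(nat \<times> bool) list"

definition bwords :: "nat \<Rightarrow> bword set" where
  "bwords n = {w. \<forall>(i, b) \<in> set w. 1 \<le> i \<and> i < n}"

definition braid_rels :: "nat \<Rightarrow> (bword \<times> bword) set" where
  "braid_rels n =
     {([(i, b), (i, \<not> b)], []) | i b. 1 \<le> i \<and> i < n}
   \<union> {([(i, True), (j, True)], [(j, True), (i, True)]) | i j.
        1 \<le> i \<and> i < n \<and> 1 \<le> j \<and> j < n \<and> (i + 2 \<le> j \<or> j + 2 \<le> i)}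
   \<union> {([(i, True), (Suc i, True), (i, True)], [(Suc i, True), (i, True), (Suc i, True)]) | i.
        1 \<le> i \<and> Suc i < n}"

inductive braid_eq :: "nat \<Rightarrow> bword \<Rightarrow> bword \<Rightarrow> bool" for n where
  refl: "braid_eq n w w"
| sym: "braid_eq n u v \<Longrightarrow> braid_eq n v u"
| trans: "braid_eq n u v \<Longrightarrow> braid_eq n v w \<Longrightarrow> braid_eq n u w"
| rel: "(l, r) \<in> braid_rels n \<Longrightarrow> braid_eq n (u @ l @ v) (u @ r @ v)"

definition braid_class :: "nat \<Rightarrow> bword \<Rightarrow> bword set" where
  "braid_class n w = {v \<in> bwords n. braid_eq n w v}"

definition braid_group :: "nat \<Rightarrow> bword set monoid" where
  "braid_group n =
     \<lparr> carrier = braid_class n ` bwords n,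
       monoid.mult = (\<lambda>A B. braid_class n ((SOME a. a \<in> A) @ (SOME b. b \<in> B))),
       one = braid_class n [] \<rparr>"

text \<open>Permutation homomorphism pi : B_n \<rightarrow> S_n, pi(sigma_i) = (i, i+1),
  permutations of {1..n} viewed as maps nat \<Rightarrow> nat fixing everything else.\<close>
definition perm_of_bword :: "bword \<Rightarrow> nat \<Rightarrow> nat" where
  "perm_of_bword w = foldr (\<lambda>(i, b) f. transpose i (Suc i) \<circ> f) w id"

definition braid_perm :: "bword set \<Rightarrow> nat \<Rightarrow> nat" where
  "braid_perm A = perm_of_bword (SOME w. w \<in> A)"

definition pure_braids :: "nat \<Rightarrow> bword set set" where
  "pure_braids n = {A \<in> carrier (braid_group n). braid_perm A = id}"

definition H_beta :: "nat \<Rightarrow> bword set \<Rightarrow> bword set set" where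
  "H_beta n \<beta> = generate (braid_group n) (insert \<beta> (pure_braids n))"

definition bi_orderable :: "('a, 'b) monoid_scheme \<Rightarrow> bool" where
  "bi_orderable G \<longleftrightarrow> (\<exists>less :: 'a \<Rightarrow> 'a \<Rightarrow> bool.
     (\<forall>x \<in> carrier G. \<not> less x x) \<and>
     (\<forall>x \<in> carrier G. \<forall>y \<in> carrier G. \<forall>z \<in> carrier G. less x y \<longrightarrow> less y z \<longrightarrow> less x z) \<and>
     (\<forall>x \<in> carrier G. \<forall>y \<in> carrier G. x \<noteq> y \<longrightarrow> less x y \<or> less y x) \<and>
     (\<forall>x \<in> carrier G. \<forall>y \<in> carrier G. \<forall>z \<in> carrier G. less x y \<longrightarrow>
        less (z \<otimes>\<^bsub>G\<^esub> x) (z \<otimes>\<^bsub>G\<^esub> y) \<and> less (x \<otimes>\<^bsub>G\<^esub> z) (y \<otimes>\<^bsub>G\<^esub> z)))"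

end

theory Submission
  imports Defs
begin

lemma beq_cong: "braid_eq n u v \<Longrightarrow> braid_eq n (p @ u @ q) (p @ v @ q)"
proof (induction rule: braid_eq.induct)
  case (refl w) show ?case by (rule braid_eq.refl)
next
  case (sym u v) then show ?case by (metis braid_eq.sym)
next
  case (trans u v w) then show ?case by (metis braid_eq.trans)
next
  case (rel l r u v) then show ?case
    using braid_eq.rel[OF rel, where u="p @ u" and v="v @ q"] by simp
qed

lemma beq_congI: assumes "braid_eq n u v" "L = p @ u @ q" "R = p @ v @ q" shows "braid_eq n L R"
  using beq_cong[OF assms(1)] assms(2,3) by simp

lemmas [trans] = braid_eq.trans

lemma rel_comm: "1 \<le> i \<Longrightarrow> i < n \<Longrightarrow> 1 \<le> j \<Longrightarrow> j < n \<Longrightarrow> i + 2 \<le> j \<or> j + 2 \<le> i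
  \<Longrightarrow> braid_eq n [(i,True),(j,True)] [(j,True),(i,True)]"
  using braid_eq.rel[where l="[(i,True),(j,True)]" and r="[(j,True),(i,True)]" and n=n and u="[]" and v="[]"]
  unfolding braid_rels_def by auto

lemma rel_braid: "1 \<le> i \<Longrightarrow> Suc i < n
  \<Longrightarrow> braid_eq n [(i,True),(Suc i,True),(i,True)] [(Suc i,True),(i,True),(Suc i,True)]"
  using braid_eq.rel[where l="[(i,True),(Suc i,True),(i,True)]" and r="[(Suc i,True),(i,True),(Suc i,True)]" and n=n and u="[]" and v="[]"]
  unfolding braid_rels_def by auto

lemma rel_cancel: "1 \<le> i \<Longrightarrow> i < n \<Longrightarrow> braid_eq n [(i,b),(i,\<not>b)] []"
  using braid_eq.rel[where l="[(i,b),(i,\<not>b)]" and r="[]" and n=n and u="[]" and v="[]"]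
  unfolding braid_rels_def by auto

definition iw :: "bword \<Rightarrow> bword" where "iw w = rev (map (\<lambda>(i,b). (i, \<not> b)) w)"

lemma iw_simps[simp]: "iw [] = []" "iw (a # w) = iw w @ [(fst a, \<not> snd a)]" "iw (u @ v) = iw v @ iw u"
  by (auto simp: iw_def split: prod.splits)

lemma bwords_simps[simp]: "[] \<in> bwords n" "(a # w \<in> bwords n) = (1 \<le> fst a \<and> fst a < n \<and> w \<in> bwords n)"
  "(u @ v \<in> bwords n) = (u \<in> bwords n \<and> v \<in> bwords n)"
  by (auto simp: bwords_def split: prod.splits)

lemma iw_bwords[simp]: "(iw w \<in> bwords n) = (w \<in> bwords n)"
  by (induction w) auto

lemma iw_cancel: "w \<in> bwords n \<Longrightarrow> braid_eq n (w @ iw w) [] \<and> braid_eq n (iw w @ w) []"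
proof (induction w)
  case Nil then show ?case by (simp add: braid_eq.refl)
next
  case (Cons a w)
  obtain i b where a: "a = (i,b)" by (cases a)
  have ib: "1 \<le> i" "i < n" "w \<in> bwords n" using Cons.prems a by auto
  have "braid_eq n ((a # w) @ iw (a # w)) ([a] @ [] @ [(i, \<not> b)])"
    by (rule beq_congI[OF conjunct1[OF Cons.IH[OF ib(3)]], of _ "[a]" "[(i, \<not> b)]"]) (simp_all add: a)
  also have "braid_eq n ([a] @ [] @ [(i, \<not> b)]) []" using rel_cancel[OF ib(1,2), of b] by (simp add: a)
  finally have 1: "braid_eq n ((a # w) @ iw (a # w)) []" .
  have "braid_eq n (iw (a # w) @ (a # w)) (iw w @ [] @ w)"
    by (rule beq_congI[OF rel_cancel[OF ib(1,2), of "\<not> b"], of _ "iw w" w]) (simp_all add: a)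
  also have "braid_eq n (iw w @ [] @ w) []" using Cons.IH[OF ib(3)] by simp
  finally show ?case using 1 by simp
qed


definition S :: "nat \<Rightarrow> nat \<Rightarrow> bword" where "S a k = map (\<lambda>i. (i,True)) [a..<a+k]"

lemma S_0[simp]: "S a 0 = []" by (simp add: S_def)
lemma S_Suc: "S a (Suc k) = (a,True) # S (Suc a) k"
  by (simp add: S_def upt_conv_Cons)
lemma S_snoc: "S a (Suc k) = S a k @ [(a+k,True)]"
  by (simp add: S_def)
lemma S_bwords: "1 \<le> a \<Longrightarrow> a + k \<le> n \<Longrightarrow> S a k \<in> bwords n"
  by (auto simp: S_def bwords_def)

lemma C1: "1 \<le> i \<Longrightarrow> i < n \<Longrightarrow> 1 \<le> b \<Longrightarrow> b + k \<le> n \<Longrightarrow> i + 2 \<le> b \<or> b + k + 1 \<le> i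
  \<Longrightarrow> braid_eq n ((i,True) # S b k) (S b k @ [(i,True)])"
proof (induction k arbitrary: b)
  case 0 then show ?case by (simp add: braid_eq.refl)
next
  case (Suc k)
  have "braid_eq n ((i,True) # S b (Suc k)) ([] @ [(b,True),(i,True)] @ S (Suc b) k)"
    by (rule beq_congI[OF rel_comm[where i=i and j=b], where p="[]" and q="S (Suc b) k"]) (use Suc.prems in \<open>auto simp: S_Suc\<close>)
  also have "braid_eq n ([] @ [(b,True),(i,True)] @ S (Suc b) k) ([(b,True)] @ (S (Suc b) k @ [(i,True)]) @ [])"
    by (rule beq_congI[OF Suc.IH[where b="Suc b"], where p="[(b,True)]" and q="[]"]) (use Suc.prems in auto)
  finally show ?case by (simp add: S_Suc)
qed

lemma A1: "1 \<le> a \<Longrightarrow> a + k \<le> n \<Longrightarrow> a \<le> j \<Longrightarrow> j + 1 < a + k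
  \<Longrightarrow> braid_eq n (S a k @ [(j,True)]) ((Suc j,True) # S a k)"
proof (induction k arbitrary: a)
  case 0 then show ?case by simp
next
  case (Suc k)
  show ?case
  proof (cases "a < j")
    case True
    have "braid_eq n (S a (Suc k) @ [(j,True)]) ([(a,True)] @ ((Suc j,True) # S (Suc a) k) @ [])"
      by (rule beq_congI[OF Suc.IH[where a="Suc a"], where p="[(a,True)]" and q="[]"]) (use Suc.prems True in \<open>auto simp: S_Suc\<close>)
    also have "braid_eq n ([(a,True)] @ ((Suc j,True) # S (Suc a) k) @ []) ([] @ [(Suc j,True),(a,True)] @ S (Suc a) k)"
      by (rule beq_congI[OF rel_comm[where i=a and j="Suc j"], where p="[]" and q="S (Suc a) k"]) (use Suc.prems True in auto)
    finally show ?thesis by (simp add: S_Suc)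
  next
    case False
    then have ja: "j = a" using Suc.prems by auto
    obtain k' where k: "k = Suc k'" using Suc.prems ja by (cases k) auto
    have "braid_eq n (S a (Suc k) @ [(j,True)]) ([(a,True),(Suc a,True)] @ ((a,True) # S (Suc (Suc a)) k') @ [])"
      by (rule beq_congI[OF braid_eq.sym[OF C1[where i=a and b="Suc (Suc a)" and k=k']], where p="[(a,True),(Suc a,True)]" and q="[]"])
        (use Suc.prems ja k in \<open>auto simp: S_Suc\<close>)
    also have "braid_eq n ([(a,True),(Suc a,True)] @ ((a,True) # S (Suc (Suc a)) k') @ [])
       ([] @ [(Suc a,True),(a,True),(Suc a,True)] @ S (Suc (Suc a)) k')"
      by (rule beq_congI[OF rel_braid[where i=a], where p="[]" and q="S (Suc (Suc a)) k'"]) (use Suc.prems ja k in auto)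
    finally show ?thesis using ja k by (simp add: S_Suc)
  qed
qed

lemma A2: "1 \<le> a \<Longrightarrow> a + k \<le> n \<Longrightarrow> a \<le> b \<Longrightarrow> b + l < a + k
  \<Longrightarrow> braid_eq n (S a k @ S b l) (S (Suc b) l @ S a k)"
proof (induction l arbitrary: b)
  case 0 then show ?case by (simp add: braid_eq.refl)
next
  case (Suc l)
  have "braid_eq n (S a k @ S b (Suc l)) ([] @ ((Suc b,True) # S a k) @ S (Suc b) l)"
    by (rule beq_congI[OF A1[where j=b], where p="[]" and q="S (Suc b) l"]) (use Suc.prems in \<open>auto simp: S_Suc\<close>)
  also have "braid_eq n ([] @ ((Suc b,True) # S a k) @ S (Suc b) l) ([(Suc b,True)] @ (S (Suc (Suc b)) l @ S a k) @ [])"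
    by (rule beq_congI[OF Suc.IH[where b="Suc b"], where p="[(Suc b,True)]" and q="[]"]) (use Suc.prems in auto)
  finally show ?case by (simp add: S_Suc)
qed

lemma Xp: "1 \<le> a \<Longrightarrow> a + k + 1 \<le> n
  \<Longrightarrow> braid_eq n (S (Suc a) k @ S a k @ [(a+k,True)]) ((a,True) # S (Suc a) k @ S a k)"
proof (induction k arbitrary: a)
  case 0 then show ?case by (simp add: braid_eq.refl)
next
  case (Suc k)
  have c: "braid_eq n ((a,True) # S (Suc (Suc a)) k) (S (Suc (Suc a)) k @ [(a,True)])"
    by (rule C1) (use Suc.prems in auto)
  have "braid_eq n (S (Suc a) (Suc k) @ S a (Suc k) @ [(a + Suc k,True)])
     ([(Suc a,True)] @ ((a,True) # S (Suc (Suc a)) k) @ (S (Suc a) k @ [(a + Suc k,True)]))"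
    by (rule beq_congI[OF braid_eq.sym[OF c], where p="[(Suc a,True)]" and q="S (Suc a) k @ [(a + Suc k,True)]"]) (simp_all add: S_Suc)
  also have "braid_eq n ([(Suc a,True)] @ ((a,True) # S (Suc (Suc a)) k) @ (S (Suc a) k @ [(a + Suc k,True)]))
     ([(Suc a,True),(a,True)] @ ((Suc a,True) # S (Suc (Suc a)) k @ S (Suc a) k) @ [])"
    by (rule beq_congI[OF Suc.IH[where a="Suc a"], where p="[(Suc a,True),(a,True)]" and q="[]"]) (use Suc.prems in auto)
  also have "braid_eq n ([(Suc a,True),(a,True)] @ ((Suc a,True) # S (Suc (Suc a)) k @ S (Suc a) k) @ [])
     ([] @ [(a,True),(Suc a,True),(a,True)] @ (S (Suc (Suc a)) k @ S (Suc a) k))"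
    by (rule beq_congI[OF braid_eq.sym[OF rel_braid[where i=a]], where p="[]" and q="S (Suc (Suc a)) k @ S (Suc a) k"]) (use Suc.prems in auto)
  also have "braid_eq n ([] @ [(a,True),(Suc a,True),(a,True)] @ (S (Suc (Suc a)) k @ S (Suc a) k))
     ([(a,True),(Suc a,True)] @ (S (Suc (Suc a)) k @ [(a,True)]) @ S (Suc a) k)"
    by (rule beq_congI[OF c, where p="[(a,True),(Suc a,True)]" and q="S (Suc a) k"]) simp_all
  finally show ?case by (simp add: S_Suc)
qed

lemma LB: "2 \<le> M \<Longrightarrow> M < n \<Longrightarrow> braid_eq n (S 1 M @ S 1 M @ [(M,True)]) ((1,True) # S 1 M @ S 1 M)"
proof -
  assume M: "2 \<le> M" "M < n"
  obtain M' where M': "M = Suc M'" using M by (cases M) auto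
  have e1: "S 1 M = S 1 M' @ [(M,True)]" using S_snoc[of 1 M'] M' by simp
  have e2: "S 1 M = (1,True) # S 2 M'" using S_Suc[of 1 M'] M' by (simp add: numeral_2_eq_2)
  have a2: "braid_eq n (S 1 M @ S 1 M') (S 2 M' @ S 1 M)"
    using A2[of 1 M n 1 M'] M M' by (simp add: numeral_2_eq_2)
  have xp: "braid_eq n (S 2 M' @ S 1 M' @ [(M,True)]) ((1,True) # S 2 M' @ S 1 M')"
    using Xp[of 1 M' n] M M' by (simp add: numeral_2_eq_2)
  have "braid_eq n (S 1 M @ S 1 M @ [(M,True)]) ([] @ (S 2 M' @ S 1 M) @ [(M,True),(M,True)])"
    by (rule beq_congI[OF a2, where p="[]" and q="[(M,True),(M,True)]"]) (use e1 in simp_all)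
  also have "braid_eq n ([] @ (S 2 M' @ S 1 M) @ [(M,True),(M,True)]) ([] @ ((1,True) # S 2 M' @ S 1 M') @ [(M,True),(M,True)])"
    by (rule beq_congI[OF xp, where p="[]" and q="[(M,True),(M,True)]"]) (use e1 in simp_all)
  also have "braid_eq n ([] @ ((1,True) # S 2 M' @ S 1 M') @ [(M,True),(M,True)]) ([(1,True)] @ (S 1 M @ S 1 M') @ [(M,True)])"
    by (rule beq_congI[OF braid_eq.sym[OF a2], where p="[(1,True)]" and q="[(M,True)]"]) (use e1 in simp_all)
  finally show ?thesis using e1 by simp
qed


definition P :: "nat \<Rightarrow> nat \<Rightarrow> bword" where "P M k = concat (replicate k (S 1 M))"

lemma P1: "2 \<le> M \<Longrightarrow> M < n \<Longrightarrow> 1 \<le> j \<Longrightarrow> j + k \<le> M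
  \<Longrightarrow> braid_eq n (P M k @ [(j,True)]) ((j+k,True) # P M k)"
proof (induction k)
  case 0 then show ?case by (simp add: P_def braid_eq.refl)
next
  case (Suc k)
  have "braid_eq n (P M (Suc k) @ [(j,True)]) (S 1 M @ ((j+k,True) # P M k) @ [])"
    by (rule beq_congI[OF Suc.IH, where p="S 1 M" and q="[]"]) (use Suc.prems in \<open>simp_all add: P_def\<close>)
  also have "braid_eq n (S 1 M @ ((j+k,True) # P M k) @ []) ([] @ ((Suc (j+k),True) # S 1 M) @ P M k)"
    by (rule beq_congI[OF A1[where a=1 and k=M and j="j+k"], where p="[]" and q="P M k"]) (use Suc.prems in auto)
  finally show ?case by (simp add: P_def)
qed

lemma P_add: "P M (a + b) = P M a @ P M b" by (simp add: P_def replicate_add)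

lemma central: "2 \<le> M \<Longrightarrow> M < n \<Longrightarrow> 1 \<le> j \<Longrightarrow> j \<le> M
  \<Longrightarrow> braid_eq n (P M (Suc M) @ [(j,True)]) ((j,True) # P M (Suc M))"
proof -
  assume a: "2 \<le> M" "M < n" "1 \<le> j" "j \<le> M"
  have e: "P M (Suc M) = P M (j - 1) @ (S 1 M @ S 1 M) @ P M (M - j)"
  proof -
    have "Suc M = (j - 1) + (2 + (M - j))" using a by simp
    then have "P M (Suc M) = P M ((j - 1) + (2 + (M - j)))" by simp
    also have "\<dots> = P M (j - 1) @ P M 2 @ P M (M - j)" by (simp only: P_add)
    also have "P M 2 = S 1 M @ S 1 M" by (simp add: P_def numeral_2_eq_2)
    finally show ?thesis .
  qed
  have "braid_eq n (P M (Suc M) @ [(j,True)]) ((P M (j - 1) @ S 1 M @ S 1 M) @ ((M,True) # P M (M - j)) @ [])"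
    by (rule beq_congI[OF P1[where j=j and k="M-j"], where p="P M (j - 1) @ S 1 M @ S 1 M" and q="[]"])
      (use a e in simp_all)
  also have "braid_eq n ((P M (j - 1) @ S 1 M @ S 1 M) @ ((M,True) # P M (M - j)) @ [])
       (P M (j - 1) @ ((1,True) # S 1 M @ S 1 M) @ P M (M - j))"
    by (rule beq_congI[OF LB, where p="P M (j - 1)" and q="P M (M - j)"]) (use a in simp_all)
  also have "braid_eq n (P M (j - 1) @ ((1,True) # S 1 M @ S 1 M) @ P M (M - j))
       ([] @ ((j,True) # P M (j - 1)) @ (S 1 M @ S 1 M @ P M (M - j)))"
    by (rule beq_congI[OF P1[where j=1 and k="j - 1"], where p="[]" and q="S 1 M @ S 1 M @ P M (M - j)"])
      (use a in simp_all)
  finally show ?thesis using e by simp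
qed

lemma central_letter: "2 \<le> M \<Longrightarrow> M < n \<Longrightarrow> 1 \<le> j \<Longrightarrow> j \<le> M
  \<Longrightarrow> braid_eq n ((j,b) # P M (Suc M)) (P M (Suc M) @ [(j,b)])"
proof (cases b)
  case True
  assume a: "2 \<le> M" "M < n" "1 \<le> j" "j \<le> M"
  then show ?thesis using True central[OF a] by (simp add: braid_eq.sym)
next
  case False
  assume a: "2 \<le> M" "M < n" "1 \<le> j" "j \<le> M"
  let ?D = "P M (Suc M)"
  have "braid_eq n (?D @ [(j,False)]) ([] @ [(j,False),(j,True)] @ (?D @ [(j,False)]))"
    by (rule beq_congI[OF braid_eq.sym[OF rel_cancel[where i=j and b=False]], where p="[]" and q="?D @ [(j,False)]"])
      (use a in simp_all)
  also have "braid_eq n ([] @ [(j,False),(j,True)] @ (?D @ [(j,False)])) ([(j,False)] @ (?D @ [(j,True)]) @ [(j,False)])"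
    by (rule beq_congI[OF braid_eq.sym[OF central], where p="[(j,False)]" and q="[(j,False)]"]) (use a in simp_all)
  also have "braid_eq n ([(j,False)] @ (?D @ [(j,True)]) @ [(j,False)]) (((j,False) # ?D) @ [] @ [])"
    by (rule beq_congI[OF rel_cancel[where i=j and b=True], where p="(j,False) # ?D" and q="[]"]) (use a in simp_all)
  finally show ?thesis using False by (simp add: braid_eq.sym)
qed

lemma central_word: "2 \<le> M \<Longrightarrow> M < n \<Longrightarrow> \<rho> \<in> bwords (Suc M)
  \<Longrightarrow> braid_eq n (\<rho> @ P M (Suc M)) (P M (Suc M) @ \<rho>)"
proof (induction \<rho>)
  case Nil then show ?case by (simp add: braid_eq.refl)
next
  case (Cons a \<rho>)
  obtain j b where ab: "a = (j,b)" by (cases a)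
  have "braid_eq n ((a # \<rho>) @ P M (Suc M)) ([a] @ (P M (Suc M) @ \<rho>) @ [])"
    by (rule beq_congI[OF Cons.IH, where p="[a]" and q="[]"]) (use Cons.prems in simp_all)
  also have "braid_eq n ([a] @ (P M (Suc M) @ \<rho>) @ []) ([] @ (P M (Suc M) @ [a]) @ \<rho>)"
    by (rule beq_congI[OF central_letter[where j=j and b=b], where p="[]" and q="\<rho>"]) (use Cons.prems ab in auto)
  finally show ?case by simp
qed

lemma conj_pow: "w \<in> bwords n
  \<Longrightarrow> braid_eq n (concat (replicate k (w @ u @ iw w))) (w @ concat (replicate k u) @ iw w)"
proof (induction k)
  case 0 then show ?case using iw_cancel[OF 0] by (simp add: braid_eq.sym)
next
  case (Suc k)
  have "braid_eq n (concat (replicate (Suc k) (w @ u @ iw w))) ((w @ u @ iw w) @ (w @ concat (replicate k u) @ iw w) @ [])"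
    by (rule beq_congI[OF Suc.IH[OF Suc.prems], where p="w @ u @ iw w" and q="[]"]) simp_all
  also have "braid_eq n ((w @ u @ iw w) @ (w @ concat (replicate k u) @ iw w) @ []) ((w @ u) @ [] @ (concat (replicate k u) @ iw w))"
    by (rule beq_congI[OF conjunct2[OF iw_cancel[OF Suc.prems]], where p="w @ u" and q="concat (replicate k u) @ iw w"]) simp_all
  finally show ?case by simp
qed

lemma bwords_mono: "w \<in> bwords m \<Longrightarrow> m \<le> n \<Longrightarrow> w \<in> bwords n"
  by (auto simp: bwords_def)

lemma key_eq: "2 \<le> M \<Longrightarrow> M < n \<Longrightarrow> \<rho> \<in> bwords (Suc M) \<Longrightarrow> w \<in> bwords n \<Longrightarrow>
  braid_eq n (concat (replicate (Suc M) ((w @ \<rho>) @ S 1 M @ iw (w @ \<rho>))))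
             (concat (replicate (Suc M) (w @ S 1 M @ iw w)))"
proof -
  assume a: "2 \<le> M" "M < n" "\<rho> \<in> bwords (Suc M)" "w \<in> bwords n"
  have rn: "\<rho> \<in> bwords n" using bwords_mono[OF a(3)] a(2) by simp
  have "braid_eq n (concat (replicate (Suc M) ((w @ \<rho>) @ S 1 M @ iw (w @ \<rho>)))) ((w @ \<rho>) @ P M (Suc M) @ iw (w @ \<rho>))"
    using conj_pow[of "w @ \<rho>" n "Suc M" "S 1 M"] a rn by (simp add: P_def)
  also have "braid_eq n ((w @ \<rho>) @ P M (Suc M) @ iw (w @ \<rho>)) (w @ (P M (Suc M) @ \<rho>) @ (iw \<rho> @ iw w))"
    by (rule beq_congI[OF central_word[OF a(1,2,3)], where p=w and q="iw \<rho> @ iw w"]) simp_all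
  also have "braid_eq n (w @ (P M (Suc M) @ \<rho>) @ (iw \<rho> @ iw w)) ((w @ P M (Suc M)) @ [] @ iw w)"
    by (rule beq_congI[OF conjunct1[OF iw_cancel[OF rn]], where p="w @ P M (Suc M)" and q="iw w"]) simp_all
  also have "braid_eq n ((w @ P M (Suc M)) @ [] @ iw w) (concat (replicate (Suc M) (w @ S 1 M @ iw w)))"
    using braid_eq.sym[OF conj_pow[OF a(4), of "Suc M" "S 1 M"]] by (simp add: P_def)
  finally show ?thesis .
qed


lemma cl_self: "w \<in> bwords n \<Longrightarrow> w \<in> braid_class n w"
  by (simp add: braid_class_def braid_eq.refl)

lemma cl_eq: "braid_eq n u v \<Longrightarrow> braid_class n u = braid_class n v"
  unfolding braid_class_def by (auto intro: braid_eq.trans braid_eq.sym)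

lemma cl_eqD: "braid_class n u = braid_class n v \<Longrightarrow> v \<in> bwords n \<Longrightarrow> braid_eq n u v"
  unfolding braid_class_def by (metis (mono_tags, lifting) braid_eq.refl mem_Collect_eq)

lemma cl_some: "w \<in> bwords n \<Longrightarrow> (SOME a. a \<in> braid_class n w) \<in> bwords n \<and> braid_eq n w (SOME a. a \<in> braid_class n w)"
proof -
  assume w: "w \<in> bwords n"
  have "(SOME a. a \<in> braid_class n w) \<in> braid_class n w" using cl_self[OF w] by (rule someI)
  then show ?thesis unfolding braid_class_def by simp
qed

lemma cl_mult: "u \<in> bwords n \<Longrightarrow> v \<in> bwords n \<Longrightarrow>
   braid_class n u \<otimes>\<^bsub>braid_group n\<^esub> braid_class n v = braid_class n (u @ v)"
proof -
  assume u: "u \<in> bwords n" and v: "v \<in> bwords n"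
  define a where "a = (SOME a. a \<in> braid_class n u)"
  define b where "b = (SOME b. b \<in> braid_class n v)"
  have ua: "braid_eq n u a" using cl_some[OF u] a_def by simp
  have vb: "braid_eq n v b" using cl_some[OF v] b_def by simp
  have "braid_eq n (u @ v) (a @ b)"
  proof -
    have "braid_eq n ([] @ u @ v) ([] @ a @ v)" by (rule beq_cong[OF ua])
    moreover have "braid_eq n (a @ v @ []) (a @ b @ [])" by (rule beq_cong[OF vb])
    ultimately show ?thesis by (simp add: braid_eq.trans)
  qed
  then show ?thesis unfolding braid_group_def using a_def b_def cl_eq by (simp add: braid_eq.sym cl_eq)
qed

lemma carrier_bg: "carrier (braid_group n) = braid_class n ` bwords n"
  by (simp add: braid_group_def)

lemma one_bg: "\<one>\<^bsub>braid_group n\<^esub> = braid_class n []"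
  by (simp add: braid_group_def)

lemma group_bg: "group (braid_group n)"
proof (rule groupI)
  fix x y assume "x \<in> carrier (braid_group n)" "y \<in> carrier (braid_group n)"
  then obtain u v where "u \<in> bwords n" "v \<in> bwords n" "x = braid_class n u" "y = braid_class n v"
    by (auto simp: carrier_bg)
  then show "x \<otimes>\<^bsub>braid_group n\<^esub> y \<in> carrier (braid_group n)" by (simp add: cl_mult carrier_bg)
next
  show "\<one>\<^bsub>braid_group n\<^esub> \<in> carrier (braid_group n)" by (simp add: carrier_bg one_bg)
next
  fix x y z assume "x \<in> carrier (braid_group n)" "y \<in> carrier (braid_group n)" "z \<in> carrier (braid_group n)"
  then obtain u v w where "u \<in> bwords n" "v \<in> bwords n" "w \<in> bwords n" "x = braid_class n u" "y = braid_class n v"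
     "z = braid_class n w"
    by (auto simp: carrier_bg)
  then show "x \<otimes>\<^bsub>braid_group n\<^esub> y \<otimes>\<^bsub>braid_group n\<^esub> z = x \<otimes>\<^bsub>braid_group n\<^esub> (y \<otimes>\<^bsub>braid_group n\<^esub> z)"
    by (simp add: cl_mult)
next
  fix x assume "x \<in> carrier (braid_group n)"
  then obtain u where "u \<in> bwords n" "x = braid_class n u" by (auto simp: carrier_bg)
  then show "\<one>\<^bsub>braid_group n\<^esub> \<otimes>\<^bsub>braid_group n\<^esub> x = x" by (simp add: cl_mult one_bg)
next
  fix x assume "x \<in> carrier (braid_group n)"
  then obtain u where u: "u \<in> bwords n" "x = braid_class n u" by (auto simp: carrier_bg)
  have "braid_class n (iw u) \<otimes>\<^bsub>braid_group n\<^esub> x = \<one>\<^bsub>braid_group n\<^esub>"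
    using u iw_cancel[OF u(1)] by (simp add: cl_mult one_bg cl_eq)
  moreover have "braid_class n (iw u) \<in> carrier (braid_group n)" using u by (simp add: carrier_bg)
  ultimately show "\<exists>y\<in>carrier (braid_group n). y \<otimes>\<^bsub>braid_group n\<^esub> x = \<one>\<^bsub>braid_group n\<^esub>" by blast
qed

lemma perm_foldr: "foldr (\<lambda>(i, b) f. transpose i (Suc i) \<circ> f) u g = perm_of_bword u \<circ> g"
  by (induction u) (auto simp: perm_of_bword_def split: prod.splits)

lemma perm_append: "perm_of_bword (u @ v) = perm_of_bword u \<circ> perm_of_bword v"
proof -
  have "perm_of_bword (u @ v) = foldr (\<lambda>(i, b) f. transpose i (Suc i) \<circ> f) u (perm_of_bword v)"
    by (simp add: perm_of_bword_def)
  also have "\<dots> = perm_of_bword u \<circ> perm_of_bword v" by (rule perm_foldr)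
  finally show ?thesis .
qed

lemma perm_simps[simp]: "perm_of_bword [] = id" "perm_of_bword (a # w) = transpose (fst a) (Suc (fst a)) \<circ> perm_of_bword w"
  by (auto simp: perm_of_bword_def split: prod.splits)

lemma perm_rel: "(l, r) \<in> braid_rels n \<Longrightarrow> perm_of_bword l = perm_of_bword r"
  unfolding braid_rels_def
  by (auto simp: fun_eq_iff transpose_def)

lemma perm_beq: "braid_eq n u v \<Longrightarrow> perm_of_bword u = perm_of_bword v"
  by (induction rule: braid_eq.induct) (auto simp: perm_append perm_rel)

lemma braid_perm_cl: "w \<in> bwords n \<Longrightarrow> braid_perm (braid_class n w) = perm_of_bword w"
  unfolding braid_perm_def using cl_some perm_beq by metis

lemma perm_iw: "perm_of_bword w \<circ> perm_of_bword (iw w) = id \<and> perm_of_bword (iw w) \<circ> perm_of_bword w = id"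
proof (induction w)
  case Nil then show ?case by simp
next
  case (Cons a w)
  then show ?case by (auto simp: perm_append fun_eq_iff)
qed

lemma perm_S: "perm_of_bword (S a k) = cycle_of_list [a..<a+k+1]"
proof (induction k arbitrary: a)
  case 0 then show ?case by simp
next
  case (Suc k)
  have e1: "[a..<a + Suc k + 1] = a # [Suc a..<Suc a + k + 1]" by (simp add: upt_conv_Cons)
  have e2: "[Suc a..<Suc a + k + 1] = Suc a # [Suc (Suc a)..<Suc a + k + 1]" by (simp add: upt_conv_Cons)
  have "perm_of_bword (S a (Suc k)) = transpose a (Suc a) \<circ> perm_of_bword (S (Suc a) k)" by (simp add: S_Suc)
  also have "\<dots> = transpose a (Suc a) \<circ> cycle_of_list (Suc a # [Suc (Suc a)..<Suc a + k + 1])"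
    using Suc.IH[of "Suc a"] e2 by simp
  also have "\<dots> = cycle_of_list [a..<a + Suc k + 1]" by (simp only: e1 e2 cycle_of_list.simps)
  finally show ?case .
qed


lemma transp_word: "1 \<le> a \<Longrightarrow> a < b \<Longrightarrow> b \<le> N \<Longrightarrow> \<exists>w\<in>bwords N. perm_of_bword w = transpose a b"
proof (induction b)
  case 0 then show ?case by simp
next
  case (Suc b)
  show ?case
  proof (cases "a = b")
    case True
    then show ?thesis using Suc.prems by (intro bexI[of _ "[(a,True)]"]) auto
  next
    case False
    then obtain w where w: "w \<in> bwords N" "perm_of_bword w = transpose a b" using Suc by auto
    have "perm_of_bword ((b,True) # w @ [(b,True)]) = transpose a (Suc b)"
      using w(2) False Suc.prems by (auto simp: perm_append fun_eq_iff transpose_def)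
    moreover have "(b,True) # w @ [(b,True)] \<in> bwords N" using w(1) Suc.prems False by auto
    ultimately show ?thesis by blast
  qed
qed

lemma realize: "p permutes {1..N} \<Longrightarrow> \<exists>w\<in>bwords N. perm_of_bword w = p"
proof -
  assume "p permutes {1..N}"
  then show ?thesis using finite_atLeastAtMost[of 1 N]
  proof (induction p rule: permutes_induct)
    case id then show ?case by (intro bexI[of _ "[]"]) auto
  next
    case (swap a b p)
    obtain w where w: "w \<in> bwords N" "perm_of_bword w = p" using swap by auto
    obtain t where t: "t \<in> bwords N" "perm_of_bword t = transpose a b"
    proof (cases "a < b")
      case True then show ?thesis using that transp_word[of a b N] swap.hyps by auto
    next
      case False then have "b < a" using swap.hyps by auto
      then show ?thesis using that transp_word[of b a N] swap.hyps by (auto simp: transpose_commute)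
    qed
    show ?case using w t by (intro bexI[of _ "t @ w"]) (auto simp: perm_append)
  qed
qed

lemma perm_ext: "finite A \<Longrightarrow> distinct xs \<Longrightarrow> distinct ys \<Longrightarrow> length xs = length ys \<Longrightarrow> set xs \<subseteq> A \<Longrightarrow> set ys \<subseteq> A
  \<Longrightarrow> \<exists>p. p permutes A \<and> map p xs = ys"
proof (induction xs arbitrary: ys)
  case Nil then show ?case by (intro exI[of _ id] conjI permutes_id) simp
next
  case (Cons x xs)
  then obtain y ys' where ys: "ys = y # ys'" by (cases ys) auto
  obtain p where p: "p permutes A" "map p xs = ys'" using Cons ys by auto
  have pxS: "p x \<in> A" using p(1) Cons.prems by (simp add: permutes_in_image)
  define p' where "p' = transpose (p x) y \<circ> p"
  have "p' permutes A" unfolding p'_def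
    using permutes_compose[OF p(1) permutes_swap_id[OF pxS]] Cons.prems ys by auto
  moreover have "map p' xs = ys'"
  proof -
    have "map p' xs = map (transpose (p x) y) ys'" using p(2) by (auto simp: p'_def)
    also have "\<dots> = ys'"
    proof (rule map_idI)
      fix v assume v: "v \<in> set ys'"
      have "v \<noteq> y" using v Cons.prems ys by auto
      moreover have "v \<noteq> p x"
      proof
        assume "v = p x"
        then have "p x \<in> p ` set xs" using v p(2) by auto
        then obtain z where "z \<in> set xs" "p z = p x" by auto
        then have "z = x" using permutes_inj[OF p(1)] by (auto dest: injD)
        then show False using \<open>z \<in> set xs\<close> Cons.prems by auto
      qed
      ultimately show "transpose (p x) y v = v" by (auto simp: transpose_def)
    qed
    finally show ?thesis .
  qed
  moreover have "p' x = y" by (simp add: p'_def)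
  ultimately show ?case using ys by auto
qed

lemma cycle_snoc: "cycle_of_list (L @ [a, b]) = cycle_of_list (L @ [a]) \<circ> transpose a b"
proof (induction L)
  case Nil then show ?case by simp
next
  case (Cons x L)
  then show ?case by (cases L) (auto simp: o_assoc)
qed

lemma cycle_rev: "cycle_of_list (rev L) = Hilbert_Choice.inv (cycle_of_list L)"
proof (induction L)
  case Nil then show ?case by simp
next
  case (Cons x L)
  show ?case
  proof (cases L)
    case Nil then show ?thesis by simp
  next
    case (Cons y zs)
    have b1: "bij (cycle_of_list (y # zs))" using permutation_of_cycle permutation_bijective by blast
    have "cycle_of_list (rev (x # L)) = cycle_of_list (rev zs @ [y, x])" using Cons by simp
    also have "\<dots> = cycle_of_list (rev zs @ [y]) \<circ> transpose y x" by (rule cycle_snoc)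
    also have "\<dots> = Hilbert_Choice.inv (cycle_of_list (y # zs)) \<circ> transpose x y"
      using Cons.IH \<open>L = y # zs\<close> by (simp add: transpose_commute)
    also have "\<dots> = Hilbert_Choice.inv (transpose x y \<circ> cycle_of_list (y # zs))"
      using o_inv_distrib[of "transpose x y" "cycle_of_list (y # zs)"] b1 by simp
    finally show ?thesis using \<open>L = y # zs\<close> by (simp only: cycle_of_list.simps)
  qed
qed

lemma perm_iw_inv: "perm_of_bword (iw w) = Hilbert_Choice.inv (perm_of_bword w)"
  using perm_iw[of w] inv_unique_comp[of "perm_of_bword w" "perm_of_bword (iw w)"] by simp

lemma perm_bij: "bij (perm_of_bword w)"
  using perm_iw[of w] o_bij by blast

lemma pow_cl: "u \<in> bwords n \<Longrightarrow> braid_class n u [^]\<^bsub>braid_group n\<^esub> k = braid_class n (concat (replicate k u))"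
proof (induction k)
  case 0 then show ?case by (simp add: one_bg)
next
  case (Suc k)
  have "concat (replicate k u) \<in> bwords n" using Suc.prems by (induction k) auto
  then show ?case using Suc by (simp add: cl_mult replicate_append_same[symmetric])
qed


lemma bi_orderable_E:
  assumes "bi_orderable G"
  obtains less where "\<forall>x \<in> carrier G. \<not> less x x"
    "\<forall>x \<in> carrier G. \<forall>y \<in> carrier G. \<forall>z \<in> carrier G. less x y \<longrightarrow> less y z \<longrightarrow> less x z"
    "\<forall>x \<in> carrier G. \<forall>y \<in> carrier G. x \<noteq> y \<longrightarrow> less x y \<or> less y x"
    "\<forall>x \<in> carrier G. \<forall>y \<in> carrier G. \<forall>z \<in> carrier G. less x y \<longrightarrow>
        less (z \<otimes>\<^bsub>G\<^esub> x) (z \<otimes>\<^bsub>G\<^esub> y) \<and> less (x \<otimes>\<^bsub>G\<^esub> z) (y \<otimes>\<^bsub>G\<^esub> z)"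
  using assms unfolding bi_orderable_def by blast

theorem mainTheorem12:
  fixes n i :: nat and \<beta> :: "bword set"
  assumes "n \<ge> 3" and "2 \<le> i" and "i \<le> n - 1"
    and "\<beta> \<in> carrier (braid_group n)"
    and "\<exists>cs. distinct cs \<and> length cs = i + 1 \<and> set cs \<subseteq> {1..n}
               \<and> braid_perm \<beta> = cycle_of_list cs"
  shows "\<not> bi_orderable ((braid_group n)\<lparr>carrier := H_beta n \<beta>\<rparr>)"
proof
  let ?G = "braid_group n"
  let ?H = "H_beta n \<beta>"
  assume bo: "bi_orderable ((braid_group n)\<lparr>carrier := H_beta n \<beta>\<rparr>)"
  obtain less where A1: "\<forall>x \<in> carrier (?G\<lparr>carrier := ?H\<rparr>). \<not> less x x"
    and A2: "\<forall>x \<in> carrier (?G\<lparr>carrier := ?H\<rparr>). \<forall>y \<in> carrier (?G\<lparr>carrier := ?H\<rparr>). \<forall>z \<in> carrier (?G\<lparr>carrier := ?H\<rparr>). less x y \<longrightarrow> less y z \<longrightarrow> less x z"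
    and A3: "\<forall>x \<in> carrier (?G\<lparr>carrier := ?H\<rparr>). \<forall>y \<in> carrier (?G\<lparr>carrier := ?H\<rparr>). x \<noteq> y \<longrightarrow> less x y \<or> less y x"
    and A4: "\<forall>x \<in> carrier (?G\<lparr>carrier := ?H\<rparr>). \<forall>y \<in> carrier (?G\<lparr>carrier := ?H\<rparr>). \<forall>z \<in> carrier (?G\<lparr>carrier := ?H\<rparr>). less x y \<longrightarrow>
        less (z \<otimes>\<^bsub>?G\<lparr>carrier := ?H\<rparr>\<^esub> x) (z \<otimes>\<^bsub>?G\<lparr>carrier := ?H\<rparr>\<^esub> y) \<and> less (x \<otimes>\<^bsub>?G\<lparr>carrier := ?H\<rparr>\<^esub> z) (y \<otimes>\<^bsub>?G\<lparr>carrier := ?H\<rparr>\<^esub> z)"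
    by (rule bi_orderable_E[OF bo])
  have cH: "carrier (?G\<lparr>carrier := ?H\<rparr>) = ?H" by simp
  have mH: "monoid.mult (?G\<lparr>carrier := ?H\<rparr>) = monoid.mult ?G" by simp
  note irr = A1[unfolded cH]
  note tr = A2[unfolded cH]
  note tot = A3[unfolded cH]
  note linv = A4[unfolded cH mH]
  interpret grp: group ?G by (rule group_bg)
  obtain cs where cs: "distinct cs" "length cs = i + 1" "set cs \<subseteq> {1..n}" "braid_perm \<beta> = cycle_of_list cs"
    using assms(5) by blast
  obtain wb where wb: "wb \<in> bwords n" "\<beta> = braid_class n wb" using assms(4) by (auto simp: carrier_bg)
  define c where "c = cycle_of_list cs"
  have pwb: "perm_of_bword wb = c" using braid_perm_cl[OF wb(1)] wb(2) cs(4) c_def by simp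
  have iM: "2 \<le> i" "i < n" "Suc i \<le> n" using assms by auto
  define L0 where "L0 = [1..<i+2]"
  have L0: "distinct L0" "length L0 = i+1" "set L0 \<subseteq> {1..n}" "set L0 \<subseteq> {1..Suc i}" using iM by (auto simp: L0_def)
  obtain W where W: "W permutes {1..n}" "map W L0 = cs" using perm_ext[of "{1..n}" L0 cs] L0 cs by auto
  obtain w where w: "w \<in> bwords n" "perm_of_bword w = W" using realize[OF W(1)] by auto
  obtain R where R: "R permutes {1..Suc i}" "map R L0 = rev L0"
    using perm_ext[of "{1..Suc i}" L0 "rev L0"] L0 by auto
  obtain \<rho> where rho: "\<rho> \<in> bwords (Suc i)" "perm_of_bword \<rho> = R" using realize[OF R(1)] by auto
  have rho_n: "\<rho> \<in> bwords n" using bwords_mono[OF rho(1) iM(3)] .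
  define c0 where "c0 = cycle_of_list L0"
  have pS: "perm_of_bword (S 1 i) = c0" using perm_S[of 1 i] by (simp add: c0_def L0_def)
  have bijW: "bij W" using W(1) permutes_bij by blast
  have bijR: "bij R" using R(1) permutes_bij by blast
  have bijc0: "bij c0" unfolding c0_def using permutation_of_cycle permutation_bijective by blast
  have conjW: "W \<circ> c0 \<circ> Hilbert_Choice.inv W = c"
    using conjugation_of_cycle[OF L0(1) bijW] W(2) c0_def c_def by simp
  have conjR: "R \<circ> c0 \<circ> Hilbert_Choice.inv R = Hilbert_Choice.inv c0"
    using conjugation_of_cycle[OF L0(1) bijR] R(2) c0_def cycle_rev[of L0] by simp
  define wX where "wX = w @ S 1 i @ iw w"
  define wY where "wY = (w @ \<rho>) @ S 1 i @ iw (w @ \<rho>)"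
  have SX: "S 1 i \<in> bwords n" using S_bwords iM by auto
  have XY: "wX \<in> bwords n" "wY \<in> bwords n" using w rho_n SX by (auto simp: wX_def wY_def)
  have pX: "perm_of_bword wX = c" using conjW by (simp add: wX_def perm_append perm_iw_inv w pS[simplified] o_assoc)
  have iW1: "\<And>x. Hilbert_Choice.inv W (W x) = x" using bijW bij_is_inj inv_f_f by metis
  have iW2: "\<And>x. W (Hilbert_Choice.inv W x) = x" using bijW bij_is_surj surj_f_inv_f by metis
  have ic0: "\<And>x. Hilbert_Choice.inv c0 (c0 x) = x" using bijc0 bij_is_inj inv_f_f by metis
  have pY: "perm_of_bword wY \<circ> c = id"
  proof -
    have "perm_of_bword wY = W \<circ> (R \<circ> c0 \<circ> Hilbert_Choice.inv R) \<circ> Hilbert_Choice.inv W"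
      by (simp add: wY_def perm_append perm_iw_inv w rho pS[simplified] o_assoc)
    also have "\<dots> = W \<circ> Hilbert_Choice.inv c0 \<circ> Hilbert_Choice.inv W" using conjR by simp
    finally show ?thesis using conjW[symmetric] by (simp add: fun_eq_iff iW1 iW2 ic0)
  qed
  have c2: "c (c (cs ! 0)) = cs ! 2"
  proof -
    have m: "map (c ^^ 2) cs = rotate 2 cs" unfolding c_def by (rule cyclic_rotation[OF cs(1)])
    have "(c ^^ 2) (cs ! 0) = map (c ^^ 2) cs ! 0" by (rule nth_map[symmetric]) (simp add: cs(2))
    also have "\<dots> = rotate 2 cs ! 0" by (simp only: m)
    also have "\<dots> = cs ! 2" using cs(2) iM by (simp add: nth_rotate)
    finally show ?thesis by (simp add: numeral_2_eq_2)
  qed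
  have cs20: "cs ! 2 \<noteq> cs ! 0" using cs(1,2) iM by (simp add: nth_eq_iff_index_eq)
  define x where "x = braid_class n wX"
  define y where "y = braid_class n wY"
  have xy_ne: "x \<noteq> y"
  proof
    assume "x = y"
    then have "perm_of_bword wX = perm_of_bword wY" using braid_perm_cl XY x_def y_def by metis
    then have "c \<circ> c = id" using pX pY by simp
    then have "c (c (cs ! 0)) = cs ! 0" by (metis comp_apply id_apply)
    then show False using c2 cs20 by simp
  qed
  have Psub: "insert \<beta> (pure_braids n) \<subseteq> carrier ?G" using assms(4) by (auto simp: pure_braids_def)
  have Hc: "?H \<subseteq> carrier ?G" unfolding H_beta_def using grp.generate_incl[OF Psub] .
  have hmul: "\<And>u v. u \<in> ?H \<Longrightarrow> v \<in> ?H \<Longrightarrow> u \<otimes>\<^bsub>?G\<^esub> v \<in> ?H" unfolding H_beta_def by (rule generate.eng)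
  have bH: "\<beta> \<in> ?H" unfolding H_beta_def by (rule generate.incl) simp
  have pureI: "\<And>u. u \<in> bwords n \<Longrightarrow> perm_of_bword u = id \<Longrightarrow> braid_class n u \<in> ?H"
    unfolding H_beta_def by (rule generate.incl) (auto simp: pure_braids_def carrier_bg braid_perm_cl)
  have iwb: "perm_of_bword wb \<circ> perm_of_bword (iw wb) = id" using perm_iw by blast
  have xH: "x \<in> ?H"
  proof -
    have "braid_class n (wX @ iw wb) \<in> ?H" using XY wb pureI[of "wX @ iw wb"] pX pwb iwb by (simp add: perm_append)
    moreover have "braid_class n (wX @ iw wb) \<otimes>\<^bsub>?G\<^esub> \<beta> = x"
    proof -
      have "braid_eq n ((wX @ iw wb) @ wb) (wX @ [] @ [])"
        by (rule beq_congI[OF conjunct2[OF iw_cancel[OF wb(1)]], where p=wX and q="[]"]) simp_all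
      then show ?thesis using wb XY by (simp add: cl_mult x_def cl_eq)
    qed
    ultimately show ?thesis using hmul bH by metis
  qed
  have yH: "y \<in> ?H"
  proof -
    have "braid_class n (wY @ wb) \<in> ?H" using XY wb pureI[of "wY @ wb"] pY pwb by (simp add: perm_append)
    moreover have ib: "inv\<^bsub>?G\<^esub> \<beta> = braid_class n (iw wb)"
    proof (rule grp.inv_equality)
      show "braid_class n (iw wb) \<otimes>\<^bsub>?G\<^esub> \<beta> = \<one>\<^bsub>?G\<^esub>"
        using wb iw_cancel[OF wb(1)] by (simp add: cl_mult one_bg cl_eq)
      show "\<beta> \<in> carrier ?G" by (rule assms(4))
      show "braid_class n (iw wb) \<in> carrier ?G" using wb by (simp add: carrier_bg)
    qed
    moreover have "inv\<^bsub>?G\<^esub> \<beta> \<in> ?H" unfolding H_beta_def by (rule generate.inv) simp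
    moreover have "braid_class n (wY @ wb) \<otimes>\<^bsub>?G\<^esub> braid_class n (iw wb) = y"
    proof -
      have "braid_eq n ((wY @ wb) @ iw wb) (wY @ [] @ [])"
        by (rule beq_congI[OF conjunct1[OF iw_cancel[OF wb(1)]], where p=wY and q="[]"]) simp_all
      then show ?thesis using wb XY by (simp add: cl_mult y_def cl_eq)
    qed
    ultimately show ?thesis using hmul by metis
  qed
  have pow_eq: "x [^]\<^bsub>?G\<^esub> Suc i = y [^]\<^bsub>?G\<^esub> Suc i"
  proof -
    have "braid_eq n (concat (replicate (Suc i) wY)) (concat (replicate (Suc i) wX))"
      using key_eq[OF iM(1,2) rho(1) w(1)] by (simp add: wX_def wY_def)
    then show ?thesis unfolding x_def y_def pow_cl[OF XY(1)] pow_cl[OF XY(2)]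
      by (rule cl_eq[OF braid_eq.sym])
  qed
  have powlem: "less a b \<Longrightarrow> a \<in> ?H \<Longrightarrow> b \<in> ?H \<Longrightarrow>
      less (a [^]\<^bsub>?G\<^esub> Suc k) (b [^]\<^bsub>?G\<^esub> Suc k) \<and> a [^]\<^bsub>?G\<^esub> Suc k \<in> ?H \<and> b [^]\<^bsub>?G\<^esub> Suc k \<in> ?H" for a b k
  proof (induction k)
    case 0
    have "a \<in> carrier ?G" "b \<in> carrier ?G" using 0 Hc by auto
    then show ?case using 0 by simp
  next
    case (Suc k)
    let ?A = "a [^]\<^bsub>?G\<^esub> Suc k" and ?B = "b [^]\<^bsub>?G\<^esub> Suc k"
    have IH: "less ?A ?B" "?A \<in> ?H" "?B \<in> ?H" using Suc by auto
    have 1: "less (?A \<otimes>\<^bsub>?G\<^esub> a) (?A \<otimes>\<^bsub>?G\<^esub> b)" using linv Suc.prems IH by blast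
    have 2: "less (?A \<otimes>\<^bsub>?G\<^esub> b) (?B \<otimes>\<^bsub>?G\<^esub> b)" using linv Suc.prems IH by blast
    have m: "?A \<otimes>\<^bsub>?G\<^esub> a \<in> ?H" "?A \<otimes>\<^bsub>?G\<^esub> b \<in> ?H" "?B \<otimes>\<^bsub>?G\<^esub> b \<in> ?H"
      using hmul IH Suc.prems by auto
    have "less (?A \<otimes>\<^bsub>?G\<^esub> a) (?B \<otimes>\<^bsub>?G\<^esub> b)" using tr m 1 2 by blast
    then show ?case using m by simp
  qed
  have "less x y \<or> less y x" using tot xH yH xy_ne by blast
  then show False
  proof
    assume "less x y"
    then have "less (x [^]\<^bsub>?G\<^esub> Suc i) (y [^]\<^bsub>?G\<^esub> Suc i)" "x [^]\<^bsub>?G\<^esub> Suc i \<in> ?H"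
      using powlem xH yH by blast+
    then show False using irr pow_eq by metis
  next
    assume "less y x"
    then have "less (y [^]\<^bsub>?G\<^esub> Suc i) (x [^]\<^bsub>?G\<^esub> Suc i)" "x [^]\<^bsub>?G\<^esub> Suc i \<in> ?H"
      using powlem xH yH by blast+
    then show False using irr pow_eq by metis
  qed
qed

end
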